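(* Let $(Q_N)_{N\ge1}$ be random finite Borel measures on $\mathbb{R}^d$ such that: (i) for every finite family of Borel sets $A_1,\dots,A_p$, $\lim_{N\to\infty}\frac1N\mathbb{E}\big[|\log Q_N(\bigcup_rA_r)-\max_r\mathbb{E}\log Q_N(A_r)|\big]=0$; (ii) for every $\Lambda\in\mathbb{R}^d$ the limit $I(\Lambda)=\lim_{N\to\infty}\frac1N\mathbb{E}[\log L_N(\Lambda)]$ exists in $[-\infty,+\infty]$, where $L_N(\Lambda)=\int e^{N\langle x,\Lambda\rangle}dQ_N(x)$; (iii) $0$ lies in the interior of $\mathcal{D}(I)=\{\Lambda:I(\Lambda)<+\infty\}$. Then for every closed set $\mathcal{V}\subset\mathbb{R}^d$, $$\limsup_{N\to\infty}\frac1N\mathbb{E}[\log Q_N(\mathcal{V})]\le\sup_{x\in\mathcal{V}}I^*(x),\qquad I^*(x)=\inf_{\Lambda\in\mathbb{R}^d}\big[-\langle x,\Lambda\rangle+I(\Lambda)\big].$$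
   Context: Convention $\log0=-\infty$. *)

theory Defs
  imports "HOL-Analysis.Analysis" "HOL-Probability.Probability"
begin

definition elog :: "ennreal \<Rightarrow> ereal" where
  "elog x = (if x = 0 then -\<infinity> else if x = \<top> then \<infinity> else ereal (ln (enn2real x)))"

text \<open>Expectation of an extended-real random variable: E[X+] - E[X-].\<close>
definition EE :: "'w measure \<Rightarrow> ('w \<Rightarrow> ereal) \<Rightarrow> ereal" where
  "EE P X = enn2ereal (\<integral>\<^sup>+ w. e2ennreal (X w) \<partial>P) - enn2ereal (\<integral>\<^sup>+ w. e2ennreal (- X w) \<partial>P)"

definition edist :: "ereal \<Rightarrow> ereal \<Rightarrow> ereal" where
  "edist a b = (if a = b then 0 else \<bar>a - b\<bar>)"

definition LN :: "nat \<Rightarrow> 'a::euclidean_space measure \<Rightarrow> 'a \<Rightarrow> ennreal" where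
  "LN N Q \<Lambda> = (\<integral>\<^sup>+ x. ennreal (exp (real N * (x \<bullet> \<Lambda>))) \<partial>Q)"

definition Istar :: "('a::euclidean_space \<Rightarrow> ereal) \<Rightarrow> 'a \<Rightarrow> ereal" where
  "Istar I x = (INF \<Lambda>. - ereal (x \<bullet> \<Lambda>) + I \<Lambda>)"

end

theory Submission
  imports Defs
begin

lemma elog_measurable[measurable]: "elog \<in> borel_measurable borel"
  unfolding elog_def by measurable

lemma elog_mono: "x \<le> y \<Longrightarrow> elog x \<le> elog y"
  unfolding elog_def
  apply (cases "x = 0"; cases "y = \<top>"; simp)
  apply (cases "y = 0", simp)
  apply (cases "x = \<top>", simp add: top_unique)
  apply (simp)
  apply (rule ln_le_cancel_iff[THEN iffD2])
  apply (auto simp: enn2real_positive_iff less_top[symmetric] zero_less_iff_neq_zero intro!: enn2real_mono)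
  done

lemma elog_cmult: "c > 0 \<Longrightarrow> elog (ennreal c * x) = ereal (ln c) + elog x"
  unfolding elog_def
  by (auto simp: ennreal_mult_eq_top_iff enn2real_mult ln_mult enn2real_positive_iff enn2real_eq_0_iff)

lemma enn2ereal_mono': "x \<le> y \<Longrightarrow> enn2ereal x \<le> enn2ereal y"
  by (simp add: less_eq_ennreal.rep_eq)

lemma EE_mono:
  assumes "\<And>w. w \<in> space P \<Longrightarrow> X w \<le> Y w"
  shows "EE P X \<le> EE P Y"
  unfolding EE_def
  apply (rule ereal_minus_mono)
  apply (intro enn2ereal_mono' nn_integral_mono e2ennreal_mono assms; assumption)
  apply (intro enn2ereal_mono' nn_integral_mono e2ennreal_mono; use assms in simp)
  done


lemma ennreal_max0: "ennreal t = ennreal (max t 0)"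
  by (cases "t \<ge> 0") (auto simp: ennreal_neg max_def)

lemma ennreal_add_max: "ennreal a + ennreal b = ennreal (max a 0 + max b 0)"
  by (subst ennreal_plus) (auto simp: ennreal_max0[symmetric])

lemma shift_pt: "e2ennreal (Y + ereal c) + e2ennreal (- Y) + ennreal (- c)
    = e2ennreal (- (Y + ereal c)) + e2ennreal Y + ennreal c"
proof (cases Y)
  case (real r)
  have "ennreal (r + c) + ennreal (- r) + ennreal (- c)
      = ennreal (max (r+c) 0 + max (-r) 0 + max (-c) 0)"
    by (subst ennreal_plus, simp, simp)+ (simp add: ennreal_max0[symmetric])
  also have "\<dots> = ennreal (max (-(r+c)) 0 + max r 0 + max c 0)"
    by (rule arg_cong[where f=ennreal]) linarith
  also have "\<dots> = ennreal (-(r+c)) + ennreal r + ennreal c"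
    by (subst ennreal_plus, simp, simp)+ (simp add: ennreal_max0[symmetric])
  finally show ?thesis using real by simp
qed simp_all

lemma shift_b1: "e2ennreal (Y + ereal c) \<le> e2ennreal Y + ennreal c"
  proof (cases Y)
    case (real r) then show ?thesis
      by (simp add: ennreal_add_max del: ennreal_plus)
  qed simp_all

lemma shift_b2: "e2ennreal (- (Y + ereal c)) \<le> e2ennreal (- Y) + ennreal (- c)"
  proof (cases Y)
    case (real r) then show ?thesis
      by (simp add: ennreal_add_max del: ennreal_plus)
  qed simp_all

lemma shift_b3: "e2ennreal Y \<le> e2ennreal (Y + ereal c) + ennreal (- c)"
  proof (cases Y)
    case (real r) then show ?thesis
      by (simp add: ennreal_add_max del: ennreal_plus)
  qed simp_all

lemma shift_b4: "e2ennreal (- Y) \<le> e2ennreal (- (Y + ereal c)) + ennreal c"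
  proof (cases Y)
    case (real r) then show ?thesis
      by (simp add: ennreal_add_max del: ennreal_plus)
  qed simp_all


lemma EE_shift:
  assumes P: "prob_space P" and Ym: "Y \<in> borel_measurable P"
  shows "EE P (\<lambda>w. Y w + ereal c) = EE P Y + ereal c"
proof -
  interpret prob_space P by fact
  define A where "A = (\<integral>\<^sup>+ w. e2ennreal (Y w + ereal c) \<partial>P)"
  define A' where "A' = (\<integral>\<^sup>+ w. e2ennreal (- (Y w + ereal c)) \<partial>P)"
  define B where "B = (\<integral>\<^sup>+ w. e2ennreal (Y w) \<partial>P)"
  define B' where "B' = (\<integral>\<^sup>+ w. e2ennreal (- Y w) \<partial>P)"
  have int: "(\<integral>\<^sup>+ w. f w + g w + ennreal d \<partial>P) = (\<integral>\<^sup>+ w. f w \<partial>P) + (\<integral>\<^sup>+ w. g w \<partial>P) + ennreal d"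
    if "f \<in> borel_measurable P" "g \<in> borel_measurable P" for f g d
    using that by (simp add: nn_integral_add emeasure_space_1)
  have int2: "(\<integral>\<^sup>+ w. f w + ennreal d \<partial>P) = (\<integral>\<^sup>+ w. f w \<partial>P) + ennreal d"
    if "f \<in> borel_measurable P" for f d
    using that by (simp add: nn_integral_add emeasure_space_1)
  have eq: "A + B' + ennreal (-c) = A' + B + ennreal c"
  proof -
    have "A + B' + ennreal (-c) = (\<integral>\<^sup>+ w. e2ennreal (Y w + ereal c) + e2ennreal (- Y w) + ennreal (-c) \<partial>P)"
      unfolding A_def B'_def using Ym by (subst int) auto
    also have "\<dots> = (\<integral>\<^sup>+ w. e2ennreal (- (Y w + ereal c)) + e2ennreal (Y w) + ennreal c \<partial>P)"
      by (simp only: shift_pt)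
    also have "\<dots> = A' + B + ennreal c"
      unfolding A'_def B_def using Ym by (subst int) auto
    finally show ?thesis .
  qed
  have b1: "A \<le> B + ennreal c"
    unfolding A_def B_def using Ym by (subst int2[symmetric]) (auto intro!: nn_integral_mono shift_b1)
  have b3: "B \<le> A + ennreal (-c)"
    unfolding A_def B_def using Ym by (subst int2[symmetric]) (auto intro!: nn_integral_mono shift_b3)
  have b2: "A' \<le> B' + ennreal (-c)"
    unfolding A'_def B'_def using Ym by (subst int2[symmetric]) (auto intro!: nn_integral_mono shift_b2)
  have b4: "B' \<le> A' + ennreal c"
    unfolding A'_def B'_def using Ym by (subst int2[symmetric]) (auto intro!: nn_integral_mono shift_b4)
  have goal: "enn2ereal A - enn2ereal A' = enn2ereal B - enn2ereal B' + ereal c"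
  proof (cases "B = \<top>")
    case True
    then have "A = \<top>" using b3 by (auto simp: top_unique)
    then show ?thesis using True by simp
  next
    case False
    then have "A \<noteq> \<top>" using b1 by (auto simp: top_unique)
    show ?thesis
    proof (cases "B' = \<top>")
      case True
      then have "A' = \<top>" using b4 by (auto simp: top_unique)
      then show ?thesis using True \<open>A \<noteq> \<top>\<close> \<open>B \<noteq> \<top>\<close>
        by (cases A; cases B; simp)
    next
      case False
      then have "A' \<noteq> \<top>" using b2 by (auto simp: top_unique)
      obtain a where a: "A = ennreal a" "0 \<le> a" using \<open>A \<noteq> \<top>\<close> by (cases A) auto
      obtain b where b: "B = ennreal b" "0 \<le> b" using \<open>B \<noteq> \<top>\<close> by (cases B) auto
      obtain a' where a': "A' = ennreal a'" "0 \<le> a'" using \<open>A' \<noteq> \<top>\<close> by (cases A') auto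
      obtain b' where b': "B' = ennreal b'" "0 \<le> b'" using \<open>B' \<noteq> \<top>\<close> by (cases B') auto
      have "ennreal (max a 0 + max b' 0 + max (-c) 0) = ennreal (max a' 0 + max b 0 + max c 0)"
        using eq unfolding a b a' b' by (simp add: ennreal_add_max del: ennreal_plus)
      then have "a + b' + max (-c) 0 = a' + b + max c 0"
        using a b a' b' by (subst (asm) ennreal_inj) auto
      then show ?thesis using a b a' b' by simp
    qed
  qed
  show ?thesis unfolding EE_def A_def[symmetric] A'_def[symmetric] B_def[symmetric] B'_def[symmetric]
    by (rule goal)
qed


lemma div_aux: "(N::real) > 0 \<Longrightarrow> y \<le> x - ereal (N*a) \<Longrightarrow> x / ereal N < ereal (B + a) \<Longrightarrow> y / ereal N < ereal B"
  by (cases x; cases y) (auto simp: field_simps)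

lemma cheb:
  assumes sQ: "sets Qm = sets borel"
  shows "emeasure Qm {y. a \<le> y \<bullet> \<Lambda>} \<le> ennreal (exp (- (real N * a))) * LN N Qm \<Lambda>"
proof -
  have H: "{y. a \<le> y \<bullet> \<Lambda>} \<in> sets Qm" unfolding sQ by measurable
  have m: "(\<lambda>y. ennreal (exp (real N * (y \<bullet> \<Lambda>)))) \<in> borel_measurable Qm"
    by (subst measurable_cong_sets[OF sQ refl]) measurable
  have "emeasure Qm {y. a \<le> y \<bullet> \<Lambda>} = (\<integral>\<^sup>+ y. indicator {y. a \<le> y \<bullet> \<Lambda>} y \<partial>Qm)"
    using H by simp
  also have "\<dots> \<le> (\<integral>\<^sup>+ y. ennreal (exp (- (real N * a))) * ennreal (exp (real N * (y \<bullet> \<Lambda>))) \<partial>Qm)"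
  proof (rule nn_integral_mono)
    fix y
    show "indicator {y. a \<le> y \<bullet> \<Lambda>} y \<le> ennreal (exp (- (real N * a))) * ennreal (exp (real N * (y \<bullet> \<Lambda>)))"
    proof (cases "a \<le> y \<bullet> \<Lambda>")
      case True
      have "0 \<le> real N * (y \<bullet> \<Lambda> - a)" using True by simp
      then have "1 \<le> exp (- (real N * a)) * exp (real N * (y \<bullet> \<Lambda>))"
        by (simp add: exp_add[symmetric] algebra_simps)
      then show ?thesis using True by (simp add: ennreal_mult[symmetric] ennreal_1[symmetric] del: ennreal_1)
    qed simp
  qed
  also have "\<dots> = ennreal (exp (- (real N * a))) * LN N Qm \<Lambda>"
    unfolding LN_def using m by (rule nn_integral_cmult)
  finally show ?thesis .
qed

lemma cheb_elog:
  assumes sQ: "sets Qm = sets borel"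
  shows "elog (emeasure Qm {y. a \<le> y \<bullet> \<Lambda>}) + ereal (real N * a) \<le> elog (LN N Qm \<Lambda>)"
proof -
  have "elog (emeasure Qm {y. a \<le> y \<bullet> \<Lambda>}) \<le> ereal (- (real N * a)) + elog (LN N Qm \<Lambda>)"
    using elog_mono[OF cheb[OF sQ, of a \<Lambda> N]] by (simp add: elog_cmult)
  then show ?thesis by (cases "elog (LN N Qm \<Lambda>)"; cases "elog (emeasure Qm {y. a \<le> y \<bullet> \<Lambda>})") auto
qed



lemma half_eventually:
  fixes Q :: "nat \<Rightarrow> 'w \<Rightarrow> 'a::euclidean_space measure"
  assumes prob: "prob_space P"
    and borel_Q: "\<And>N w. N \<ge> 1 \<Longrightarrow> w \<in> space P \<Longrightarrow> sets (Q N w) = sets borel"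
    and random_Q: "\<And>N A. N \<ge> 1 \<Longrightarrow> A \<in> sets borel \<Longrightarrow> (\<lambda>w. emeasure (Q N w) A) \<in> borel_measurable P"
    and lim: "(\<lambda>N. EE P (\<lambda>w. elog (LN N (Q N w) \<Lambda>)) / ereal (real N)) \<longlonglongrightarrow> IL"
    and lt: "IL < ereal (B + a)"
  shows "eventually (\<lambda>N. EE P (\<lambda>w. elog (emeasure (Q N w) {y. a \<le> y \<bullet> \<Lambda>})) / ereal (real N) < ereal B) sequentially"
proof -
  have "eventually (\<lambda>N. EE P (\<lambda>w. elog (LN N (Q N w) \<Lambda>)) / ereal (real N) < ereal (B + a)) sequentially"
    using order_tendstoD(2)[OF lim lt] .
  moreover have "eventually (\<lambda>N. N \<ge> (1::nat)) sequentially" by (rule eventually_ge_at_top)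
  ultimately show ?thesis
  proof eventually_elim
    case (elim N)
    let ?Y = "\<lambda>w. elog (emeasure (Q N w) {y. a \<le> y \<bullet> \<Lambda>})"
    let ?X = "\<lambda>w. elog (LN N (Q N w) \<Lambda>)"
    have Hb: "{y::'a. a \<le> y \<bullet> \<Lambda>} \<in> sets borel" by measurable
    have Ym: "?Y \<in> borel_measurable P"
      using measurable_compose[OF random_Q[OF elim(2) Hb] elog_measurable] by simp
    have "EE P ?Y + ereal (real N * a) = EE P (\<lambda>w. ?Y w + ereal (real N * a))"
      by (rule EE_shift[OF prob Ym, symmetric])
    also have "\<dots> \<le> EE P ?X"
      by (rule EE_mono) (rule cheb_elog[OF borel_Q[OF elim(2)]])
    finally have "EE P ?Y \<le> EE P ?X - ereal (real N * a)"
      by (cases "EE P ?Y"; cases "EE P ?X") auto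
    then show ?case using div_aux[of "real N"] elim by auto
  qed
qed

lemma div_aux2: "(N::real) > 0 \<Longrightarrow> x / ereal N < ereal B \<Longrightarrow> x \<le> ereal (N*B)"
  by (cases x) (auto simp: field_simps)

lemma div_aux3: "(N::real) > 0 \<Longrightarrow> x / ereal N < ereal e \<Longrightarrow> z \<le> x + ereal (N*B) \<Longrightarrow> z / ereal N \<le> ereal (B + e)"
  by (cases x; cases z) (auto simp: field_simps)

lemma edist_aux: "M \<le> ereal m \<Longrightarrow> z \<le> edist z M + ereal m"
  unfolding edist_def by (cases z; cases M) auto

lemma edist_nonneg: "edist a b \<ge> 0"
  unfolding edist_def by auto

lemma EE_nonneg: "(\<And>w. D w \<ge> 0) \<Longrightarrow> EE P D = enn2ereal (\<integral>\<^sup>+ w. e2ennreal (D w) \<partial>P)"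
  unfolding EE_def by (simp add: e2ennreal_neg zero_ennreal.rep_eq)



lemma union_bound:
  fixes Q :: "nat \<Rightarrow> 'w \<Rightarrow> 'a::euclidean_space measure"
  assumes prob: "prob_space P"
    and borel_Q: "\<And>N w. N \<ge> 1 \<Longrightarrow> w \<in> space P \<Longrightarrow> sets (Q N w) = sets borel"
    and random_Q: "\<And>N A. N \<ge> 1 \<Longrightarrow> A \<in> sets borel \<Longrightarrow> (\<lambda>w. emeasure (Q N w) A) \<in> borel_measurable P"
    and cond_i: "\<And>\<A>. finite \<A> \<Longrightarrow> \<A> \<noteq> {} \<Longrightarrow> \<A> \<subseteq> sets borel \<Longrightarrow>
       (\<lambda>N. enn2ereal (\<integral>\<^sup>+ w. e2ennreal (edist (elog (emeasure (Q N w) (\<Union>\<A>)))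
                (Max ((\<lambda>A. EE P (\<lambda>w'. elog (emeasure (Q N w') A))) ` \<A>))) \<partial>P) / ereal (real N))
         \<longlonglongrightarrow> 0"
    and F: "finite F" "F \<noteq> {}" "F \<subseteq> sets borel"
    and ev: "\<And>A. A \<in> F \<Longrightarrow> eventually (\<lambda>N. EE P (\<lambda>w. elog (emeasure (Q N w) A)) / ereal (real N) < ereal B) sequentially"
    and V: "V \<in> sets borel" "V \<subseteq> \<Union>F"
  shows "limsup (\<lambda>N. EE P (\<lambda>w. elog (emeasure (Q N w) V)) / ereal (real N)) \<le> ereal B"
proof (rule ereal_le_epsilon2)
  fix e :: real assume e: "0 < e"
  have UF: "\<Union>F \<in> sets borel" using F by (intro sets.finite_Union) auto
  have E1: "eventually (\<lambda>N. \<forall>A\<in>F. EE P (\<lambda>w. elog (emeasure (Q N w) A)) / ereal (real N) < ereal B) sequentially"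
    using F(1) ev by (intro eventually_ball_finite) auto
  have E2: "eventually (\<lambda>N. enn2ereal (\<integral>\<^sup>+ w. e2ennreal (edist (elog (emeasure (Q N w) (\<Union>F)))
                (Max ((\<lambda>A. EE P (\<lambda>w'. elog (emeasure (Q N w') A))) ` F))) \<partial>P) / ereal (real N) < ereal e) sequentially"
    using order_tendstoD(2)[OF cond_i[OF F]] e by simp
  have E3: "eventually (\<lambda>N. N \<ge> (1::nat)) sequentially" by (rule eventually_ge_at_top)
  have "eventually (\<lambda>N. EE P (\<lambda>w. elog (emeasure (Q N w) V)) / ereal (real N) \<le> ereal B + ereal e) sequentially"
    using E1 E2 E3
  proof eventually_elim
    case (elim N)
    define M where "M = Max ((\<lambda>A. EE P (\<lambda>w'. elog (emeasure (Q N w') A))) ` F)"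
    define Z where "Z = (\<lambda>w. elog (emeasure (Q N w) (\<Union>F)))"
    define D where "D = (\<lambda>w. edist (Z w) M)"
    have Npos: "real N > 0" using elim by simp
    have MB: "M \<le> ereal (real N * B)"
      unfolding M_def using F elim(1) by (subst Max_le_iff) (auto intro: div_aux2[OF Npos])
    have Zm: "Z \<in> borel_measurable P"
      unfolding Z_def using measurable_compose[OF random_Q[OF elim(3) UF] elog_measurable] by simp
    have Dm: "D \<in> borel_measurable P"
      unfolding D_def edist_def using Zm by measurable
    have "EE P (\<lambda>w. elog (emeasure (Q N w) V)) \<le> EE P (\<lambda>w. D w + ereal (real N * B))"
    proof (rule EE_mono)
      fix w assume w: "w \<in> space P"
      have "elog (emeasure (Q N w) V) \<le> Z w"
        unfolding Z_def using borel_Q[OF elim(3) w] V UF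
        by (intro elog_mono emeasure_mono) auto
      also have "\<dots> \<le> D w + ereal (real N * B)"
        unfolding D_def by (rule edist_aux[OF MB])
      finally show "elog (emeasure (Q N w) V) \<le> D w + ereal (real N * B)" .
    qed
    also have "\<dots> = EE P D + ereal (real N * B)"
      by (rule EE_shift[OF prob Dm])
    finally have le: "EE P (\<lambda>w. elog (emeasure (Q N w) V)) \<le> EE P D + ereal (real N * B)" .
    have "EE P D / ereal (real N) < ereal e"
      using elim(2) unfolding D_def Z_def M_def
      by (subst EE_nonneg) (auto simp: edist_nonneg)
    from div_aux3[OF Npos this le] show ?case by simp
  qed
  then show "limsup (\<lambda>N. EE P (\<lambda>w. elog (emeasure (Q N w) V)) / ereal (real N)) \<le> ereal B + ereal e"
    by (rule Limsup_bounded)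
qed



theorem mainTheorem9:
  fixes P :: "'w measure"
    and Q :: "nat \<Rightarrow> 'w \<Rightarrow> 'a::euclidean_space measure"
    and I :: "'a \<Rightarrow> ereal"
    and V :: "'a set"
  assumes prob: "prob_space P"
    and borel_Q: "\<And>N w. N \<ge> 1 \<Longrightarrow> w \<in> space P \<Longrightarrow> sets (Q N w) = sets borel"
    and finite_Q: "\<And>N w. N \<ge> 1 \<Longrightarrow> w \<in> space P \<Longrightarrow> finite_measure (Q N w)"
    and random_Q: "\<And>N A. N \<ge> 1 \<Longrightarrow> A \<in> sets borel \<Longrightarrow>
                     (\<lambda>w. emeasure (Q N w) A) \<in> borel_measurable P"
    and cond_i: "\<And>\<A>. finite \<A> \<Longrightarrow> \<A> \<noteq> {} \<Longrightarrow> \<A> \<subseteq> sets borel \<Longrightarrow>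
       (\<lambda>N. enn2ereal (\<integral>\<^sup>+ w. e2ennreal (edist (elog (emeasure (Q N w) (\<Union>\<A>)))
                (Max ((\<lambda>A. EE P (\<lambda>w'. elog (emeasure (Q N w') A))) ` \<A>))) \<partial>P) / ereal (real N))
         \<longlonglongrightarrow> 0"
    and cond_ii: "\<And>\<Lambda>. (\<lambda>N. EE P (\<lambda>w. elog (LN N (Q N w) \<Lambda>)) / ereal (real N)) \<longlonglongrightarrow> I \<Lambda>"
    and cond_iii: "0 \<in> interior {\<Lambda>. I \<Lambda> < \<infinity>}"
    and closed_V: "closed V"
  shows "limsup (\<lambda>N. EE P (\<lambda>w. elog (emeasure (Q N w) V)) / ereal (real N))
           \<le> (SUP x\<in>V. Istar I x)"
proof (rule ccontr)
  let ?L = "limsup (\<lambda>N. EE P (\<lambda>w. elog (emeasure (Q N w) V)) / ereal (real N))"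
  let ?S = "SUP x\<in>V. Istar I x"
  assume "\<not> ?L \<le> ?S"
  then have "?S < ?L" by simp
  then obtain B where B: "?S < ereal B" "ereal B < ?L" using ereal_dense2 by blast
  have Ix: "Istar I x < ereal B" if "x \<in> V" for x
    using that B(1) by (meson SUP_upper le_less_trans)
  obtain \<delta> where \<delta>: "\<delta> > 0" "ball 0 \<delta> \<subseteq> {\<Lambda>. I \<Lambda> < \<infinity>}"
    using cond_iii mem_interior by blast
  define d where "d = \<delta> / 2"
  have d: "d > 0" unfolding d_def using \<delta> by simp
  define Dirs where "Dirs = ({1, -1::real} \<times> (Basis::'a set))"
  have Dirs_fin: "finite Dirs" unfolding Dirs_def by simp
  have "eventually (\<lambda>M. \<forall>p\<in>Dirs. I ((fst p * d) *\<^sub>R snd p) < ereal (B + d * M)) at_top"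
  proof (rule eventually_ball_finite[OF Dirs_fin], rule ballI)
    fix p assume p: "p \<in> Dirs"
    have "norm ((fst p * d) *\<^sub>R snd p) = d" using p d unfolding Dirs_def by auto
    then have "(fst p * d) *\<^sub>R snd p \<in> ball 0 \<delta>" unfolding d_def using \<delta> by simp
    then have fin: "I ((fst p * d) *\<^sub>R snd p) < \<infinity>" using \<delta>(2) by blast
    show "eventually (\<lambda>M. I ((fst p * d) *\<^sub>R snd p) < ereal (B + d * M)) at_top"
    proof (cases "I ((fst p * d) *\<^sub>R snd p)")
      case (real r)
      show ?thesis using eventually_gt_at_top[of "(r - B) / d"]
      proof eventually_elim
        case (elim M)
        then have "r - B < d * M" using d by (simp add: field_simps)
        then show ?case using real by simp
      qed
    qed (use fin in auto)
  qed
  then obtain M where M: "\<And>p. p \<in> Dirs \<Longrightarrow> I ((fst p * d) *\<^sub>R snd p) < ereal (B + d * M)"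
    unfolding eventually_at_top_linorder by auto
  define K where "K = (\<Inter>b\<in>(Basis::'a set). {y::'a. \<bar>y \<bullet> b\<bar> \<le> M})"
  have "closed K" unfolding K_def
    by (intro closed_INT ballI closed_Collect_le continuous_intros)
  moreover have "bounded K"
    unfolding bounded_iff
  proof (intro exI ballI)
    fix y assume "y \<in> K"
    have "norm y \<le> (\<Sum>b\<in>Basis. \<bar>y \<bullet> b\<bar>)" by (rule norm_le_l1)
    also have "\<dots> \<le> (\<Sum>b\<in>(Basis::'a set). M)"
      using \<open>y \<in> K\<close> unfolding K_def by (intro sum_mono) auto
    finally show "norm y \<le> (\<Sum>b\<in>(Basis::'a set). M)" .
  qed
  ultimately have cK: "compact (V \<inter> K)"
    using closed_V by (meson bounded_Int closed_Int compact_eq_bounded_closed)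
  have "\<forall>x\<in>V. \<exists>p. snd p < x \<bullet> fst p \<and> I (fst p) < ereal (B + snd p)"
  proof
    fix x assume "x \<in> V"
    then have "(INF \<Lambda>. - ereal (x \<bullet> \<Lambda>) + I \<Lambda>) < ereal B"
      using Ix unfolding Istar_def by blast
    then obtain \<Lambda> where L: "- ereal (x \<bullet> \<Lambda>) + I \<Lambda> < ereal B"
      by (auto simp: INF_less_iff)
    show "\<exists>p. snd p < x \<bullet> fst p \<and> I (fst p) < ereal (B + snd p)"
    proof (cases "I \<Lambda>")
      case (real r)
      then have "r - B < x \<bullet> \<Lambda>" using L by simp
      then show ?thesis using real
        by (intro exI[of _ "(\<Lambda>, (x \<bullet> \<Lambda> + r - B) / 2)"]) (auto simp: field_simps)
    next
      case MInf
      then show ?thesis by (intro exI[of _ "(\<Lambda>, x \<bullet> \<Lambda> - 1)"]) auto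
    next
      case PInf
      then show ?thesis using L by simp
    qed
  qed
  then obtain g where g: "\<And>x. x \<in> V \<Longrightarrow> snd (g x) < x \<bullet> fst (g x) \<and> I (fst (g x)) < ereal (B + snd (g x))"
    by metis
  obtain C where C: "C \<subseteq> V \<inter> K" "finite C" "V \<inter> K \<subseteq> \<Union> ((\<lambda>x. {y. snd (g x) < y \<bullet> fst (g x)}) ` C)"
  proof (rule compactE_image[OF cK])
    show "open {y. snd (g x) < y \<bullet> fst (g x)}" for x
      by (intro open_Collect_less continuous_intros)
    show "V \<inter> K \<subseteq> (\<Union>x\<in>V \<inter> K. {y. snd (g x) < y \<bullet> fst (g x)})"
      using g by auto
  qed blast
  define F where "F = (\<lambda>x. {y. snd (g x) \<le> y \<bullet> fst (g x)}) ` C \<union> (\<lambda>p. {y. d * M \<le> y \<bullet> ((fst p * d) *\<^sub>R snd p)}) ` Dirs"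
  have F1: "finite F" unfolding F_def using C Dirs_fin by simp
  have F2: "F \<noteq> {}" unfolding F_def Dirs_def using nonempty_Basis by blast
  have F3: "F \<subseteq> sets borel" unfolding F_def by auto
  have Fev: "eventually (\<lambda>N. EE P (\<lambda>w. elog (emeasure (Q N w) A)) / ereal (real N) < ereal B) sequentially"
    if "A \<in> F" for A
    using that unfolding F_def
  proof (elim UnE imageE)
    fix x assume "x \<in> C" "A = {y. snd (g x) \<le> y \<bullet> fst (g x)}"
    then show ?thesis using g[of x] C(1)
      by (auto intro!: half_eventually[OF prob borel_Q random_Q cond_ii])
  next
    fix p assume p: "p \<in> Dirs" and A: "A = {y. d * M \<le> y \<bullet> ((fst p * d) *\<^sub>R snd p)}"
    show ?thesis unfolding A
      by (rule half_eventually[OF prob borel_Q random_Q cond_ii M[OF p]])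
  qed
  have VF: "V \<subseteq> \<Union>F"
  proof
    fix y assume y: "y \<in> V"
    show "y \<in> \<Union>F"
    proof (cases "y \<in> K")
      case True
      then obtain x where "x \<in> C" "snd (g x) < y \<bullet> fst (g x)" using C(3) y by blast
      then show ?thesis unfolding F_def by (auto intro: less_imp_le)
    next
      case False
      then obtain b where b: "b \<in> Basis" "\<not> \<bar>y \<bullet> b\<bar> \<le> M" unfolding K_def by auto
      show ?thesis
      proof (cases "y \<bullet> b > M")
        case True
        have "d * M \<le> y \<bullet> ((1 * d) *\<^sub>R b)" using True d by simp
        moreover have "(1, b) \<in> Dirs" unfolding Dirs_def using b by simp
        ultimately show ?thesis unfolding F_def by force
      next
        case False
        then have "y \<bullet> b < - M" using b by auto
        then have "d * M \<le> d * (- (y \<bullet> b))" using d by (intro mult_left_mono) auto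
        then have "d * M \<le> y \<bullet> ((-1 * d) *\<^sub>R b)" by simp
        moreover have "(-1, b) \<in> Dirs" unfolding Dirs_def using b by simp
        ultimately show ?thesis unfolding F_def by force
      qed
    qed
  qed
  have "?L \<le> ereal B"
    by (rule union_bound[OF prob borel_Q random_Q cond_i F1 F2 F3 Fev borel_closed[OF closed_V] VF])
  then show False using B(2) by simp
qed


end
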